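(* Let $r\in\mathbb{R}_+$. The map $(\mathbb{R}^2)^n\to\big[2^{\mathbb{R}^2}\big]^n$ given by $(p_1,\dots,p_n)\mapsto\big(\mathcal{N}_{\mathcal{G}_{\mathrm{LD}}(\{p_1,\dots,p_n\},r)}(p_1),\dots,\mathcal{N}_{\mathcal{G}_{\mathrm{LD}}(\{p_1,\dots,p_n\},r)}(p_n)\big)$ is spatially distributed over the $r$-disk graph $\mathcal{G}_{\mathrm{disk}}(\{p_1,\dots,p_n\},r)$.
   Context: For a tuple $(p_1,\dots,p_n)\in(\mathbb{R}^2)^n$ (possibly with repeated entries), $\mathcal{P}=\{p_1,\dots,p_n\}$ denotes the set of its distinct points. For such a point set, the Voronoi cell of $p_i$ is $V_i(\mathcal{P})=\{q\in\mathbb{R}^2:\|q-p_i\|\le\|q-p_j\|\ \forall p_j\in\mathcal{P}\}$; $B_\rho(p)$ is the closed Euclidean ball of radius $\rho$ about $p$. The $r$-disk graph $\mathcal{G}_{\mathrm{disk}}(\mathcal{P},r)$ has vertex set $\mathcal{P}$ and an edge between distinct $p_i,p_j$ iff $\|p_i-p_j\|\le r$. The $r$-limited Delaunay graph $\mathcal{G}_{\mathrm{LD}}(\mathcal{P},r)$ has vertex set $\mathcal{P}$ and an edge between distinct $p_i,p_j$ iff $\big(V_i(\mathcal{P})\cap B_{r/2}(p_i)\big)\cap\big(V_j(\mathcal{P})\cap B_{r/2}(p_j)\big)\neq\emptyset$. $\mathcal{N}_{\mathcal{G}}(p)$ denotes the set of neighbors of vertex $p$ in the graph $\mathcal{G}$.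 Given a proximity graph function $\mathcal{G}$ (assigning a graph with vertex set $\mathcal{P}$ to each point set $\mathcal{P}$) and a set $Y$, a map $f:(\mathbb{R}^2)^n\to Y^n$ is spatially distributed over $\mathcal{G}$ if there exist maps $\tilde f_i:\mathbb{R}^2\times 2^{\mathbb{R}^2}\to Y$, $i=1,\dots,n$, such that for all $(p_1,\dots,p_n)$, the $i$-th component satisfies $f_i(p_1,\dots,p_n)=\tilde f_i\big(p_i,\{p_j: p_j\in\mathcal{N}_{\mathcal{G}(\{p_1,\dots,p_n\})}(p_i)\}\big)$. *)

theory Defs
  imports "HOL-Analysis.Analysis"
begin

type_synonym pt = "real ^ 2"

text \<open>Tuples $(p_1,\dots,p_n)$ are encoded as functions p :: nat => pt, only the
values at indices i < n matter; the point set is p ` {..<n}.\<close>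

definition point_set :: "nat \<Rightarrow> (nat \<Rightarrow> pt) \<Rightarrow> pt set" where
  "point_set n p = p ` {..<n}"

definition voronoi_cell :: "pt set \<Rightarrow> pt \<Rightarrow> pt set" where
  "voronoi_cell P c = {q. \<forall>pj\<in>P. norm (q - c) \<le> norm (q - pj)}"

text \<open>A proximity graph function is given by its edge relation: G P u v means
u, v are adjacent in the graph G(P) (vertex set P).\<close>

definition disk_graph :: "real \<Rightarrow> pt set \<Rightarrow> pt \<Rightarrow> pt \<Rightarrow> bool" where
  "disk_graph r P u v \<longleftrightarrow> u \<in> P \<and> v \<in> P \<and> u \<noteq> v \<and> norm (u - v) \<le> r"

definition limited_delaunay_graph :: "real \<Rightarrow> pt set \<Rightarrow> pt \<Rightarrow> pt \<Rightarrow> bool" where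
  "limited_delaunay_graph r P u v \<longleftrightarrow> u \<in> P \<and> v \<in> P \<and> u \<noteq> v \<and>
     (voronoi_cell P u \<inter> cball u (r/2)) \<inter> (voronoi_cell P v \<inter> cball v (r/2)) \<noteq> {}"

definition neighbors :: "(pt set \<Rightarrow> pt \<Rightarrow> pt \<Rightarrow> bool) \<Rightarrow> pt set \<Rightarrow> pt \<Rightarrow> pt set" where
  "neighbors G P u = {v \<in> P. G P u v}"

definition spatially_distributed ::
  "nat \<Rightarrow> ((nat \<Rightarrow> pt) \<Rightarrow> nat \<Rightarrow> 'y) \<Rightarrow> (pt set \<Rightarrow> pt \<Rightarrow> pt \<Rightarrow> bool) \<Rightarrow> bool" where
  "spatially_distributed n f G \<longleftrightarrow>
     (\<exists>ft :: nat \<Rightarrow> pt \<Rightarrow> pt set \<Rightarrow> 'y. \<forall>p. \<forall>i<n.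
        f p i = ft i (p i) {p j | j. j < n \<and> p j \<in> neighbors G (point_set n p) (p i)})"

end

theory Submission
  imports Defs
begin

lemma ld_local:
  assumes uP: "u \<in> P"
  shows "limited_delaunay_graph r P u v \<longleftrightarrow>
         limited_delaunay_graph r (insert u {w\<in>P. disk_graph r P u w}) u v"
    (is "?A \<longleftrightarrow> ?B")
proof
  let ?Q = "insert u {w\<in>P. disk_graph r P u w}"
  have QP: "?Q \<subseteq> P" using uP by auto
  assume ?A
  then have vP: "v \<in> P" and uv: "u \<noteq> v" and
    ne: "(voronoi_cell P u \<inter> cball u (r/2)) \<inter> (voronoi_cell P v \<inter> cball v (r/2)) \<noteq> {}"
    unfolding limited_delaunay_graph_def by blast+
  then obtain q where q: "q \<in> (voronoi_cell P u \<inter> cball u (r/2)) \<inter> (voronoi_cell P v \<inter> cball v (r/2))"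
    by blast
  then have qu: "q \<in> voronoi_cell P u" "norm (q - u) \<le> r/2"
    and qv: "q \<in> voronoi_cell P v" "norm (q - v) \<le> r/2"
    by (simp_all add: dist_norm norm_minus_commute)
  have "norm (u - v) \<le> norm (u - q) + norm (q - v)" using norm_triangle_ineq[of "u - q" "q - v"] by simp
  then have "norm (u - v) \<le> r" using qu qv by (simp add: norm_minus_commute)
  then have vQ: "v \<in> ?Q" using vP uv uP by (auto simp: disk_graph_def)
  have "q \<in> voronoi_cell ?Q u" "q \<in> voronoi_cell ?Q v"
    using qu(1) qv(1) QP unfolding voronoi_cell_def by blast+
  then have "q \<in> (voronoi_cell ?Q u \<inter> cball u (r/2)) \<inter> (voronoi_cell ?Q v \<inter> cball v (r/2))"
    using qu(2) qv(2) by (simp add: dist_norm norm_minus_commute)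
  then show ?B using vQ uv unfolding limited_delaunay_graph_def by blast
next
  let ?Q = "insert u {w\<in>P. disk_graph r P u w}"
  assume ?B
  then have vQ: "v \<in> ?Q" and uv: "u \<noteq> v" and
    ne: "(voronoi_cell ?Q u \<inter> cball u (r/2)) \<inter> (voronoi_cell ?Q v \<inter> cball v (r/2)) \<noteq> {}"
    unfolding limited_delaunay_graph_def by blast+
  then obtain q where q: "q \<in> (voronoi_cell ?Q u \<inter> cball u (r/2)) \<inter> (voronoi_cell ?Q v \<inter> cball v (r/2))"
    by blast
  then have qu: "q \<in> voronoi_cell ?Q u" "norm (q - u) \<le> r/2"
    and qv: "q \<in> voronoi_cell ?Q v" "norm (q - v) \<le> r/2"
    by (simp_all add: dist_norm norm_minus_commute)
  have vP: "v \<in> P" using vQ uP by auto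
  have far: "norm (q - u) \<le> norm (q - w)" if "w \<in> P" "w \<notin> ?Q" for w
  proof -
    have "norm (u - w) > r" using that uP by (auto simp: disk_graph_def)
    moreover have "norm (u - w) \<le> norm (u - q) + norm (q - w)" using norm_triangle_ineq[of "u - q" "q - w"] by simp
    ultimately show ?thesis using qu(2) by (simp add: norm_minus_commute)
  qed
  have quv: "norm (q - v) \<le> norm (q - u)" using qv(1) unfolding voronoi_cell_def by blast
  have "q \<in> voronoi_cell P u"
    unfolding voronoi_cell_def
  proof safe
    fix w assume "w \<in> P"
    show "norm (q - u) \<le> norm (q - w)"
    proof (cases "w \<in> ?Q")
      case True then show ?thesis using qu(1) unfolding voronoi_cell_def by blast
    next
      case False then show ?thesis using far[OF \<open>w \<in> P\<close>] by blast
    qed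
  qed
  moreover have "q \<in> voronoi_cell P v"
    unfolding voronoi_cell_def
  proof safe
    fix w assume "w \<in> P"
    show "norm (q - v) \<le> norm (q - w)"
    proof (cases "w \<in> ?Q")
      case True then show ?thesis using qv(1) unfolding voronoi_cell_def by blast
    next
      case False then show ?thesis using far[OF \<open>w \<in> P\<close>] quv by linarith
    qed
  qed
  ultimately have "q \<in> (voronoi_cell P u \<inter> cball u (r/2)) \<inter> (voronoi_cell P v \<inter> cball v (r/2))"
    using qu(2) qv(2) by (simp add: dist_norm norm_minus_commute)
  then show ?A using vP uP uv unfolding limited_delaunay_graph_def by blast
qed

lemma main_eq:
  fixes p :: "nat \<Rightarrow> pt"
  assumes i: "i < n"
  shows "neighbors (limited_delaunay_graph r) (point_set n p) (p i) =
     neighbors (limited_delaunay_graph r)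
       (insert (p i) {p j | j. j < n \<and> p j \<in> neighbors (disk_graph r) (point_set n p) (p i)}) (p i)"
proof -
  let ?P = "point_set n p"
  have uP: "p i \<in> ?P" using i by (simp add: point_set_def)
  have S: "{p j | j. j < n \<and> p j \<in> neighbors (disk_graph r) ?P (p i)}
      = {w\<in>?P. disk_graph r ?P (p i) w}"
    unfolding neighbors_def point_set_def by blast
  have L: "limited_delaunay_graph r P u v \<Longrightarrow> v \<in> P" for P u v
    by (simp add: limited_delaunay_graph_def)
  show ?thesis
    unfolding S
  proof (rule set_eqI)
    fix v
    show "v \<in> neighbors (limited_delaunay_graph r) ?P (p i) \<longleftrightarrow>
      v \<in> neighbors (limited_delaunay_graph r) (insert (p i) {w \<in> ?P. disk_graph r ?P (p i) w}) (p i)"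
      unfolding neighbors_def mem_Collect_eq
      using ld_local[OF uP, of r v] L[of ?P "p i" v]
        L[of "insert (p i) {w \<in> ?P. disk_graph r ?P (p i) w}" "p i" v] by blast
  qed
qed

theorem lemma1p5:
  fixes r :: real and n :: nat
  assumes "r > 0"
  shows "spatially_distributed n
           (\<lambda>p i. neighbors (limited_delaunay_graph r) (point_set n p) (p i))
           (disk_graph r)"
  unfolding spatially_distributed_def
  apply (rule exI[where x="\<lambda>i x S. neighbors (limited_delaunay_graph r) (insert x S) x"])
  using main_eq by blast

end
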